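(* Let $\pi$ be a smooth, positive probability density on the torus $\mathbb{T}^d$ and $\gamma$ a smooth vector field on $\mathbb{T}^d$ with $\nabla\cdot(\pi\gamma)=0$. Let $\Phi_{\Delta t}:\mathbb{T}^d\to\mathbb{T}^d$ be a numerical flow for $\dot x=\gamma(x)$ with $\Phi_{\Delta t}(x)=x+\gamma(x)\Delta t+K_1(x,\Delta t)\Delta t^2$, where $K_1$ is bounded uniformly on $\mathbb{T}^d$ for $\Delta t$ small, and suppose there exist $\Delta t_0>0$ and $L>0$ with $|\Phi_{\Delta t}(z_1)-\Phi_{\Delta t}(z_2)|\le L|z_1-z_2|$ for all $z_1,z_2$ and all $\Delta t<\Delta t_0$. Let $(\xi_n)$ be i.i.d. $\mathcal{N}(0,I)$ and define, with the same noise and $\widetilde{Z}_0=\widetilde{Y}_0=x$, $$\widetilde{Z}_{n+1}=\Phi_{\Delta t}(\widetilde{Z}_n)+\nabla\log\pi(\Phi_{\Delta t}(\widetilde{Z}_n))\Delta t+\sqrt{2\Delta t}\,\xi_n,\qquad \widetilde{Y}_{n+1}=\widetilde{Y}_n+\nabla\log\pi(\widetilde{Y}_n)\Delta t+\gamma(\widetilde{Y}_n)\Delta t+\sqrt{2\Delta t}\,\xi_n.$$ Then for $t=n\Delta t$ there exists a constant $C(t)>0$ independent of $\Delta t$ such that $\mathbb{E}_x|\widetilde{Y}_n-\widetilde{Z}_n|\le C(t)\Delta t$ for $\Delta t$ sufficiently small.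
   Context: $\widetilde{Z}_n$ is the unadjusted (non-Metropolised) Lie–Trotter splitting scheme and $\widetilde{Y}_n$ is the Euler–Maruyama discretisation of $dY_t=(\nabla\log\pi(Y_t)+\gamma(Y_t))dt+\sqrt2\,dW_t$. $\mathbb{E}_x$ denotes expectation with both chains started at $x$. *)

theory Defs
  imports "HOL-Probability.Probability"
begin

text \<open>The torus T^d is represented by its universal cover real^'d: functions on the
torus are Z^d-periodic functions on real^'d, and the chains are taken on the lift.\<close>

definition partial :: "'d::finite \<Rightarrow> (real^'d \<Rightarrow> real) \<Rightarrow> real^'d \<Rightarrow> real" where
  "partial i f x = frechet_derivative f (at x) (axis i 1)"

inductive_set iter_partials :: "(real^'d::finite \<Rightarrow> real) \<Rightarrow> (real^'d \<Rightarrow> real) set"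
  for f where
  base: "f \<in> iter_partials f"
| step: "g \<in> iter_partials f \<Longrightarrow> partial i g \<in> iter_partials f"

definition smooth_fun :: "(real^'d::finite \<Rightarrow> real) \<Rightarrow> bool" where
  "smooth_fun f \<longleftrightarrow> (\<forall>g\<in>iter_partials f. \<forall>x. g differentiable (at x))"

definition smooth_field :: "(real^'d::finite \<Rightarrow> real^'d) \<Rightarrow> bool" where
  "smooth_field F \<longleftrightarrow> (\<forall>j. smooth_fun (\<lambda>x. F x $ j))"

definition grad :: "(real^'d::finite \<Rightarrow> real) \<Rightarrow> real^'d \<Rightarrow> real^'d" where
  "grad f x = (\<chi> i. partial i f x)"

definition divergence :: "(real^'d::finite \<Rightarrow> real^'d) \<Rightarrow> real^'d \<Rightarrow> real" where
  "divergence F x = (\<Sum>i\<in>UNIV. partial i (\<lambda>y. F y $ i) x)"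

definition periodic :: "(real^'d::finite \<Rightarrow> 'b) \<Rightarrow> bool" where
  "periodic f \<longleftrightarrow> (\<forall>x i. f (x + axis i 1) = f x)"

definition std_normal_vec_density :: "real^'d::finite \<Rightarrow> real" where
  "std_normal_vec_density x = (2 * pi) powr (- real CARD('d) / 2) * exp (- (norm x)\<^sup>2 / 2)"

text \<open>Splitting chain: Phi is the numerical flow at the given step dt, b = grad log pi.\<close>
primrec Zchain :: "(real^'d::finite \<Rightarrow> real^'d) \<Rightarrow> (real^'d \<Rightarrow> real^'d) \<Rightarrow> real
    \<Rightarrow> (nat \<Rightarrow> 'w \<Rightarrow> real^'d) \<Rightarrow> real^'d \<Rightarrow> nat \<Rightarrow> 'w \<Rightarrow> real^'d" where
  "Zchain Phi b dt xi x 0 w = x"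
| "Zchain Phi b dt xi x (Suc n) w =
     Phi (Zchain Phi b dt xi x n w) + dt *\<^sub>R b (Phi (Zchain Phi b dt xi x n w))
     + sqrt (2 * dt) *\<^sub>R xi n w"

primrec Ychain :: "(real^'d::finite \<Rightarrow> real^'d) \<Rightarrow> (real^'d \<Rightarrow> real^'d) \<Rightarrow> real
    \<Rightarrow> (nat \<Rightarrow> 'w \<Rightarrow> real^'d) \<Rightarrow> real^'d \<Rightarrow> nat \<Rightarrow> 'w \<Rightarrow> real^'d" where
  "Ychain b g dt xi x 0 w = x"
| "Ychain b g dt xi x (Suc n) w =
     Ychain b g dt xi x n w + dt *\<^sub>R b (Ychain b g dt xi x n w)
     + dt *\<^sub>R g (Ychain b g dt xi x n w) + sqrt (2 * dt) *\<^sub>R xi n w"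

end

theory Submission
  imports Defs
begin


lemma periodic_nat:
  assumes "periodic f"
  shows "f (x + real m *\<^sub>R axis i 1) = f x"
proof (induction m)
  case 0 then show ?case by simp
next
  case (Suc m)
  have "f (x + real (Suc m) *\<^sub>R axis i 1) = f ((x + real m *\<^sub>R axis i 1) + axis i 1)"
    by (simp add: algebra_simps)
  also have "\<dots> = f (x + real m *\<^sub>R axis i 1)" using assms unfolding periodic_def by blast
  finally show ?case using Suc by simp
qed

lemma periodic_int:
  assumes "periodic f"
  shows "f (x + of_int k *\<^sub>R axis i 1) = f x"
proof (cases "k \<ge> 0")
  case True
  then obtain m where "k = int m" by (metis nonneg_eq_int)
  then show ?thesis using periodic_nat[OF assms] by simp
next
  case False
  define m where "m = nat (- k)"
  then have m: "k = - int m" using False by simp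
  have "f (x + of_int k *\<^sub>R axis i 1) = f ((x + of_int k *\<^sub>R axis i 1) + real m *\<^sub>R axis i 1)"
    using periodic_nat[OF assms] by simp
  also have "\<dots> = f x" using m by (simp add: algebra_simps)
  finally show ?thesis .
qed

lemma periodic_sum:
  assumes "periodic f" "finite S"
  shows "f (x + (\<Sum>i\<in>S. of_int (k i) *\<^sub>R axis i 1)) = f x"
  using assms(2)
proof (induction S)
  case empty then show ?case by simp
next
  case (insert j S)
  have "f (x + (\<Sum>i\<in>insert j S. of_int (k i) *\<^sub>R axis i 1))
      = f ((x + (\<Sum>i\<in>S. of_int (k i) *\<^sub>R axis i 1)) + of_int (k j) *\<^sub>R axis j 1)"
    using insert by (simp add: algebra_simps)
  also have "\<dots> = f (x + (\<Sum>i\<in>S. of_int (k i) *\<^sub>R axis i 1))"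
    by (rule periodic_int[OF assms(1)])
  finally show ?case using insert by simp
qed

lemma periodic_reduce:
  fixes f :: "real^'d::finite \<Rightarrow> 'b"
  assumes "periodic f"
  shows "f x = f (x - (\<chi> i. of_int \<lfloor>x $ i\<rfloor>))"
proof -
  have e: "(\<chi> i. of_int \<lfloor>x $ i\<rfloor>) = (\<Sum>i\<in>UNIV. of_int \<lfloor>x $ i\<rfloor> *\<^sub>R axis i (1::real))"
    using basis_expansion[of "(\<chi> i. of_int \<lfloor>x $ i\<rfloor>) :: real^'d"]
    by (simp add: scalar_mult_eq_scaleR)
  have "f ((x - (\<chi> i. of_int \<lfloor>x $ i\<rfloor>)) + (\<Sum>i\<in>UNIV. of_int \<lfloor>x $ i\<rfloor> *\<^sub>R axis i 1))
        = f (x - (\<chi> i. of_int \<lfloor>x $ i\<rfloor>))"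
    by (rule periodic_sum[OF assms]) simp
  then show ?thesis using e by (metis diff_add_cancel)
qed

lemma periodic_bounded:
  fixes g :: "real^'d::finite \<Rightarrow> 'b::real_normed_vector"
  assumes "continuous_on UNIV g" "periodic g"
  shows "\<exists>B. \<forall>x. norm (g x) \<le> B"
proof -
  have "compact (g ` cbox 0 1)"
    by (rule compact_continuous_image) (auto intro: continuous_on_subset[OF assms(1)])
  then obtain B where B: "\<forall>y\<in>g ` cbox 0 1. norm y \<le> B"
    using compact_imp_bounded bounded_iff by metis
  have "norm (g x) \<le> B" for x
  proof -
    have "x - (\<chi> i. of_int \<lfloor>x $ i\<rfloor>) \<in> cbox 0 1"
      unfolding mem_box_cart
      by (auto simp: of_int_floor_le) (smt (verit) real_of_int_floor_add_one_gt)
    then show ?thesis using B periodic_reduce[OF assms(2), of x] by auto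
  qed
  then show ?thesis by blast
qed

lemma smooth_diff:
  assumes "smooth_fun f" "g \<in> iter_partials f"
  shows "g differentiable (at x)"
  using assms unfolding smooth_fun_def by blast

lemma smooth_cont:
  assumes "smooth_fun f" "g \<in> iter_partials f"
  shows "continuous_on UNIV g"
  using smooth_diff[OF assms] by (simp add: differentiable_imp_continuous_on differentiable_on_def
      differentiable_at_withinI)

lemma partial_periodic:
  fixes f :: "real^'d::finite \<Rightarrow> real"
  assumes d: "\<And>x. f differentiable (at x)" and p: "periodic f"
  shows "periodic (partial i f)"
  unfolding periodic_def
proof (intro allI)
  fix x :: "real^'d" and j :: 'd
  let ?a = "axis j (1::real)"
  have fd: "(f has_derivative frechet_derivative f (at (x + ?a))) (at (x + ?a))"
    using d frechet_derivative_works by blast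
  have "((\<lambda>y. f (y + ?a)) has_derivative frechet_derivative f (at (x + ?a))) (at x)"
    using has_derivative_compose[OF has_derivative_add[OF has_derivative_ident has_derivative_const] fd]
    by (simp add: o_def)
  moreover have "(\<lambda>y. f (y + ?a)) = f" using p unfolding periodic_def by auto
  ultimately have "frechet_derivative f (at (x + ?a)) = frechet_derivative f (at x)"
    using frechet_derivative_at by metis
  then show "partial i f (x + ?a) = partial i f x" unfolding partial_def by simp
qed

lemma deriv_expand:
  fixes f :: "real^'d::finite \<Rightarrow> real"
  assumes "f differentiable (at x)"
  shows "frechet_derivative f (at x) h = (\<Sum>i\<in>UNIV. h $ i * partial i f x)"
proof -
  have lin: "linear (frechet_derivative f (at x))"
    using assms frechet_derivative_works has_derivative_linear by blast
  have "frechet_derivative f (at x) h = frechet_derivative f (at x) (\<Sum>i\<in>UNIV. h $ i *\<^sub>R axis i 1)"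
    using basis_expansion[of h] by (simp add: scalar_mult_eq_scaleR)
  also have "\<dots> = (\<Sum>i\<in>UNIV. h $ i * frechet_derivative f (at x) (axis i 1))"
    using lin by (simp add: linear_sum linear_scale)
  finally show ?thesis unfolding partial_def .
qed

lemma lipschitz_from_partials:
  fixes f :: "real^'d::finite \<Rightarrow> real"
  assumes d: "\<And>x. f differentiable (at x)"
    and c: "\<And>i. continuous_on UNIV (partial i f)"
    and p: "\<And>i. periodic (partial i f)"
  shows "\<exists>L\<ge>0. \<forall>x y. \<bar>f x - f y\<bar> \<le> L * norm (x - y)"
proof -
  have "\<forall>i. \<exists>B. \<forall>x. norm (partial i f x) \<le> B"
    using periodic_bounded[OF c p] by blast
  then obtain B where B: "\<And>i x. \<bar>partial i f x\<bar> \<le> B i" by (metis real_norm_def)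
  define L where "L = (\<Sum>i\<in>UNIV. B i)"
  have L0: "L \<ge> 0" unfolding L_def by (rule sum_nonneg) (meson B abs_ge_zero order_trans)
  have on: "onorm (frechet_derivative f (at x)) \<le> L" for x
  proof (rule onorm_le)
    fix h :: "real^'d"
    have "norm (frechet_derivative f (at x) h) = \<bar>\<Sum>i\<in>UNIV. h $ i * partial i f x\<bar>"
      using deriv_expand[OF d] by simp
    also have "\<dots> \<le> (\<Sum>i\<in>UNIV. \<bar>h $ i * partial i f x\<bar>)" by (rule sum_abs)
    also have "\<dots> \<le> (\<Sum>i\<in>UNIV. norm h * B i)"
      by (rule sum_mono) (simp add: abs_mult mult_mono' B component_le_norm_cart)
    also have "\<dots> = L * norm h" unfolding L_def by (simp add: sum_distrib_left mult.commute)
    finally show "norm (frechet_derivative f (at x) h) \<le> L * norm h" .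
  qed
  have "\<bar>f x - f y\<bar> \<le> L * norm (x - y)" for x y
    using differentiable_bound[of UNIV f "\<lambda>x. frechet_derivative f (at x)" L x y] d on
      frechet_derivative_works by auto
  then show ?thesis using L0 by blast
qed

lemma vec_lip:
  fixes F :: "real^'d::finite \<Rightarrow> real^'e::finite"
  assumes "\<And>j. \<exists>L\<ge>0. \<forall>x y. \<bar>F x $ j - F y $ j\<bar> \<le> L * norm (x - y)"
  shows "\<exists>L\<ge>0. \<forall>x y. norm (F x - F y) \<le> L * norm (x - y)"
proof -
  obtain L where L: "\<And>j. L j \<ge> 0" "\<And>j x y. \<bar>F x $ j - F y $ j\<bar> \<le> L j * norm (x - y)"
    using assms by metis
  have "norm (F x - F y) \<le> (\<Sum>j\<in>UNIV. L j) * norm (x - y)" for x y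
  proof -
    have "norm (F x - F y) \<le> (\<Sum>j\<in>UNIV. \<bar>(F x - F y) $ j\<bar>)" by (rule norm_le_l1_cart)
    also have "\<dots> \<le> (\<Sum>j\<in>UNIV. L j * norm (x - y))" by (rule sum_mono) (simp add: L(2))
    finally show ?thesis by (simp add: sum_distrib_right)
  qed
  moreover have "(\<Sum>j\<in>UNIV. L j) \<ge> 0" by (simp add: L(1) sum_nonneg)
  ultimately show ?thesis by blast
qed

lemma field_lip:
  fixes F :: "real^'d::finite \<Rightarrow> real^'d"
  assumes "smooth_field F" "periodic F"
  shows "\<exists>L\<ge>0. \<forall>x y. norm (F x - F y) \<le> L * norm (x - y)"
proof (rule vec_lip)
  fix j
  let ?g = "\<lambda>x. F x $ j"
  have sm: "smooth_fun ?g" using assms(1) unfolding smooth_field_def by blast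
  have pg: "periodic ?g" using assms(2) unfolding periodic_def by simp
  have d: "\<And>x. ?g differentiable (at x)" using smooth_diff[OF sm iter_partials.base] .
  show "\<exists>L\<ge>0. \<forall>x y. \<bar>F x $ j - F y $ j\<bar> \<le> L * norm (x - y)"
    by (rule lipschitz_from_partials[OF d])
       (auto intro: smooth_cont[OF sm] iter_partials.intros partial_periodic[OF d pg])
qed

lemma field_cont:
  fixes F :: "real^'d::finite \<Rightarrow> real^'d"
  assumes "smooth_field F"
  shows "continuous_on UNIV F"
proof -
  have "continuous_on UNIV (\<lambda>x. \<chi> j. F x $ j)"
    by (rule continuous_on_vec_lambda)
       (use assms in \<open>auto simp: smooth_field_def intro: smooth_cont iter_partials.base\<close>)
  then show ?thesis by simp
qed

lemma grad_ln:
  fixes p :: "real^'d::finite \<Rightarrow> real"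
  assumes "smooth_fun p" "\<forall>y. p y > 0"
  shows "grad (\<lambda>y. ln (p y)) x $ i = partial i p x / p x"
proof -
  have fd: "(p has_derivative frechet_derivative p (at x)) (at x)"
    using smooth_diff[OF assms(1) iter_partials.base] frechet_derivative_works by blast
  have "((\<lambda>y. ln (p y)) has_derivative (\<lambda>h. frechet_derivative p (at x) h / p x)) (at x)"
    using assms(2) by (auto intro!: derivative_eq_intros fd simp: divide_inverse)
  then have "frechet_derivative (\<lambda>y. ln (p y)) (at x) = (\<lambda>h. frechet_derivative p (at x) h / p x)"
    using frechet_derivative_at by metis
  then show ?thesis unfolding grad_def partial_def by simp
qed

lemma grad_ln_lip:
  fixes p :: "real^'d::finite \<Rightarrow> real"
  assumes sm: "smooth_fun p" and pos: "\<forall>y. p y > 0" and per: "periodic p"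
  shows "\<exists>L\<ge>0. \<forall>x y. norm (grad (\<lambda>y. ln (p y)) x - grad (\<lambda>y. ln (p y)) y) \<le> L * norm (x - y)"
proof (rule vec_lip)
  fix i :: 'd
  let ?q = "partial i p"
  let ?h = "\<lambda>x. ?q x / p x"
  have qi: "?q \<in> iter_partials p" by (rule iter_partials.step[OF iter_partials.base])
  have dp: "\<And>x. p differentiable (at x)" using smooth_diff[OF sm iter_partials.base] .
  have dq: "\<And>x. ?q differentiable (at x)" using smooth_diff[OF sm qi] .
  have hd: "(?h has_derivative (\<lambda>v. (frechet_derivative ?q (at x) v * p x - ?q x * frechet_derivative p (at x) v) / (p x * p x))) (at x)" for x
  proof -
    have "p x \<noteq> 0" using pos by (metis less_irrefl)
    then show ?thesis
      using has_derivative_divide'[OF dq[of x, unfolded frechet_derivative_works] dp[of x, unfolded frechet_derivative_works]]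
      by simp
  qed
  have d: "\<And>x. ?h differentiable (at x)" using hd differentiable_def by blast
  have pj: "partial j ?h x = (partial j ?q x * p x - ?q x * partial j p x) / (p x * p x)" for j x
  proof -
    have "frechet_derivative ?h (at x) = (\<lambda>v. (frechet_derivative ?q (at x) v * p x - ?q x * frechet_derivative p (at x) v) / (p x * p x))"
      using frechet_derivative_at[OF hd[of x]] by (rule sym)
    then show ?thesis unfolding partial_def by simp
  qed
  have c: "continuous_on UNIV (partial j ?h)" for j
  proof -
    have c1: "continuous_on UNIV (partial j ?q)" by (rule smooth_cont[OF sm]) (intro iter_partials.intros)
    have c2: "continuous_on UNIV ?q" by (rule smooth_cont[OF sm qi])
    have c3: "continuous_on UNIV p" by (rule smooth_cont[OF sm iter_partials.base])
    have c4: "continuous_on UNIV (partial j p)" by (rule smooth_cont[OF sm]) (intro iter_partials.intros)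
    have "continuous_on UNIV (\<lambda>x. (partial j ?q x * p x - ?q x * partial j p x) / (p x * p x))"
    proof -
      have nz: "\<And>x. p x \<noteq> 0" using pos by (metis less_irrefl)
      show ?thesis by (intro continuous_intros c1 c2 c3 c4) (simp add: nz)
    qed
    moreover have "partial j ?h = (\<lambda>x. (partial j ?q x * p x - ?q x * partial j p x) / (p x * p x))"
      using pj by (rule ext)
    ultimately show ?thesis by simp
  qed
  have ph: "periodic ?h"
    using partial_periodic[OF dp per, of i] per unfolding periodic_def by simp
  obtain L where "L \<ge> 0" "\<forall>x y. \<bar>?h x - ?h y\<bar> \<le> L * norm (x - y)"
    using lipschitz_from_partials[OF d c partial_periodic[OF d ph]] by blast
  then show "\<exists>L\<ge>0. \<forall>x y. \<bar>grad (\<lambda>y. ln (p y)) x $ i - grad (\<lambda>y. ln (p y)) y $ i\<bar> \<le> L * norm (x - y)"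
    using grad_ln[OF sm pos] by auto
qed

lemma grad_ln_bounded_cont:
  fixes p :: "real^'d::finite \<Rightarrow> real"
  assumes sm: "smooth_fun p" and pos: "\<forall>y. p y > 0" and per: "periodic p"
  shows "continuous_on UNIV (grad (\<lambda>y. ln (p y)))"
proof -
  obtain L where "\<forall>x y. norm (grad (\<lambda>y. ln (p y)) x - grad (\<lambda>y. ln (p y)) y) \<le> L * norm (x - y)"
    "L \<ge> 0"
    using grad_ln_lip[OF assms] by blast
  then have "L-lipschitz_on UNIV (grad (\<lambda>y. ln (p y)))"
    by (intro lipschitz_onI) (auto simp: dist_norm)
  then show ?thesis by (rule lipschitz_on_continuous_on)
qed

lemma recur:
  fixes e :: "nat \<Rightarrow> real"
  assumes e0: "e 0 = 0" and st: "\<And>n. e (Suc n) \<le> (1 + c * dt) * e n + a * dt\<^sup>2"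
    and c: "c \<ge> 0" and a: "a \<ge> 0" and dt: "dt > 0"
  shows "e n \<le> real n * a * dt\<^sup>2 * (1 + c * dt) ^ n"
proof (induction n)
  case 0 then show ?case using e0 by simp
next
  case (Suc n)
  have q: "1 \<le> (1 + c * dt) ^ n" using c dt by (simp add: one_le_power)
  have q1: "0 \<le> c * dt" using c dt by simp
  have "e (Suc n) \<le> (1 + c * dt) * (real n * a * dt\<^sup>2 * (1 + c * dt) ^ n) + a * dt\<^sup>2"
    using st[of n] Suc mult_left_mono[OF Suc, of "1 + c * dt"] q1 by linarith
  also have "\<dots> \<le> (1 + c * dt) * (real n * a * dt\<^sup>2 * (1 + c * dt) ^ n) + a * dt\<^sup>2 * (1 + c*dt)^Suc n"
  proof -
    have "1 \<le> (1 + c * dt) ^ Suc n" using c dt by (intro one_le_power) simp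
    then have "a * dt\<^sup>2 * 1 \<le> a * dt\<^sup>2 * (1 + c * dt) ^ Suc n" using a by (intro mult_left_mono) auto
    then show ?thesis by simp
  qed
  also have "\<dots> = real (Suc n) * a * dt\<^sup>2 * (1 + c * dt) ^ Suc n" by (simp add: algebra_simps)
  finally show ?case .
qed

lemma one_step:
  fixes Y Z P K s :: "'a::real_normed_vector" and gam b :: "'a \<Rightarrow> 'a"
  assumes P: "P = Z + dt *\<^sub>R gam Z + dt\<^sup>2 *\<^sub>R K"
    and lg: "norm (gam Y - gam Z) \<le> Lg * norm (Y - Z)"
    and lb: "norm (b Y - b P) \<le> Lb * norm (Y - P)"
    and G: "norm (gam Z) \<le> G" and K: "norm K \<le> B"
    and dt: "0 < dt" "dt \<le> 1" and L: "Lg \<ge> 0" "Lb \<ge> 0"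
  shows "norm ((Y + dt *\<^sub>R b Y + dt *\<^sub>R gam Y + s) - (P + dt *\<^sub>R b P + s))
         \<le> (1 + (Lg + Lb) * dt) * norm (Y - Z) + (B + Lb * G + Lb * B) * dt\<^sup>2"
proof -
  let ?e = "norm (Y - Z)"
  have e1: "(Y + dt *\<^sub>R b Y + dt *\<^sub>R gam Y + s) - (P + dt *\<^sub>R b P + s)
      = (Y - Z) + dt *\<^sub>R (gam Y - gam Z) - dt\<^sup>2 *\<^sub>R K + dt *\<^sub>R (b Y - b P)"
    by (simp add: P algebra_simps)
  have n1: "norm ((Y - Z) + dt *\<^sub>R (gam Y - gam Z) - dt\<^sup>2 *\<^sub>R K + dt *\<^sub>R (b Y - b P))
      \<le> ?e + dt * norm (gam Y - gam Z) + dt\<^sup>2 * norm K + dt * norm (b Y - b P)"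
    using dt by (smt (verit) norm_scaleR norm_triangle_ineq norm_triangle_ineq4 abs_of_pos zero_less_power)
  have YP: "Y - P = (Y - Z) - dt *\<^sub>R gam Z - dt\<^sup>2 *\<^sub>R K" by (simp add: P algebra_simps)
  have n2: "norm (Y - P) \<le> ?e + dt * G + dt\<^sup>2 * B"
  proof -
    have "norm (Y - P) \<le> ?e + dt * norm (gam Z) + dt\<^sup>2 * norm K"
      unfolding YP using dt by (smt (verit) norm_scaleR norm_triangle_ineq4 abs_of_pos zero_less_power)
    also have "\<dots> \<le> ?e + dt * G + dt\<^sup>2 * B"
      using G K dt by (smt (verit) mult_left_mono zero_less_power)
    finally show ?thesis .
  qed
  have B0: "B \<ge> 0" using K norm_ge_zero order_trans by blast
  have G0: "G \<ge> 0" using G norm_ge_zero order_trans by blast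
  have a1: "dt * norm (gam Y - gam Z) \<le> dt * (Lg * ?e)" using lg dt by simp
  have a2: "dt\<^sup>2 * norm K \<le> dt\<^sup>2 * B" using K dt by simp
  have a3: "dt * norm (b Y - b P) \<le> dt * (Lb * (?e + dt * G + dt\<^sup>2 * B))"
    using lb n2 L dt by (smt (verit) mult_left_mono)
  have a4: "dt * (Lb * (dt\<^sup>2 * B)) \<le> Lb * B * dt\<^sup>2"
  proof -
    have "dt * (dt\<^sup>2 * (Lb * B)) \<le> 1 * (dt\<^sup>2 * (Lb * B))"
      using dt L B0 by (intro mult_right_mono) auto
    then show ?thesis by (simp add: algebra_simps)
  qed
  have "norm ((Y + dt *\<^sub>R b Y + dt *\<^sub>R gam Y + s) - (P + dt *\<^sub>R b P + s))
      \<le> ?e + dt * (Lg * ?e) + dt\<^sup>2 * B + dt * (Lb * (?e + dt * G + dt\<^sup>2 * B))"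
    unfolding e1 using n1 a1 a2 a3 by linarith
  also have "\<dots> = (1 + (Lg + Lb) * dt) * ?e + (B + Lb * G) * dt\<^sup>2 + dt * (Lb * (dt\<^sup>2 * B))"
    by (simp add: algebra_simps power2_eq_square)
  also have "\<dots> \<le> (1 + (Lg + Lb) * dt) * ?e + (B + Lb * G + Lb * B) * dt\<^sup>2"
    using a4 by (simp add: algebra_simps)
  finally show ?thesis .
qed


theorem lemmaC1:
  fixes M :: "'w measure"
    and p :: "real^'d::finite \<Rightarrow> real"
    and gamma :: "real^'d \<Rightarrow> real^'d"
    and Phi :: "real \<Rightarrow> real^'d \<Rightarrow> real^'d"
    and K1 :: "real^'d \<Rightarrow> real \<Rightarrow> real^'d"
    and xi :: "nat \<Rightarrow> 'w \<Rightarrow> real^'d"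
    and x :: "real^'d"
  assumes "prob_space M"
    and "smooth_fun p" and "\<forall>y. p y > 0" and "periodic p"
    and "integral (cbox 0 1) p = 1"
    and "smooth_field gamma" and "periodic gamma"
    and "\<forall>y. divergence (\<lambda>z. p z *\<^sub>R gamma z) y = 0"
    and "\<forall>dt y i. dt > 0 \<longrightarrow> Phi dt (y + axis i 1) = Phi dt y + axis i 1"
    and "\<forall>dt y. dt > 0 \<longrightarrow> Phi dt y = y + dt *\<^sub>R gamma y + dt\<^sup>2 *\<^sub>R K1 y dt"
    and "\<exists>B \<delta>. \<delta> > 0 \<and> (\<forall>dt y. 0 < dt \<and> dt < \<delta> \<longrightarrow> norm (K1 y dt) \<le> B)"
    and "\<exists>dt0 L. dt0 > 0 \<and> L > 0 \<and>
           (\<forall>dt z1 z2. 0 < dt \<and> dt < dt0 \<longrightarrow> norm (Phi dt z1 - Phi dt z2) \<le> L * norm (z1 - z2))"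
    and "prob_space.indep_vars M (\<lambda>_. borel) xi UNIV"
    and "\<forall>n. distributed M lborel (xi n) (\<lambda>y. ennreal (std_normal_vec_density y))"
  shows "\<forall>t > 0. \<exists>C > 0. \<exists>\<delta> > 0. \<forall>n dt. 0 < dt \<and> dt < \<delta> \<and> real n * dt = t \<longrightarrow>
           integrable M (\<lambda>w. norm (Ychain (grad (\<lambda>y. ln (p y))) gamma dt xi x n w
                                    - Zchain (Phi dt) (grad (\<lambda>y. ln (p y))) dt xi x n w)) \<and>
           (\<integral>w. norm (Ychain (grad (\<lambda>y. ln (p y))) gamma dt xi x n w
                        - Zchain (Phi dt) (grad (\<lambda>y. ln (p y))) dt xi x n w) \<partial>M) \<le> C * dt"
proof (intro allI impI)
  fix t :: real assume t: "t > 0"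
  let ?b = "grad (\<lambda>y. ln (p y))"
  note A = assms
  interpret P: prob_space M by (rule A(1))
  obtain Lg where Lg: "Lg \<ge> 0" "\<forall>x y. norm (gamma x - gamma y) \<le> Lg * norm (x - y)"
    using field_lip[OF A(6) A(7)] by blast
  have gc: "continuous_on UNIV gamma" by (rule field_cont[OF A(6)])
  obtain G where G: "\<forall>x. norm (gamma x) \<le> G" using periodic_bounded[OF gc A(7)] by blast
  obtain Lb where Lb: "Lb \<ge> 0" "\<forall>x y. norm (?b x - ?b y) \<le> Lb * norm (x - y)"
    using grad_ln_lip[OF A(2) A(3) A(4)] by blast
  have bc: "continuous_on UNIV ?b" by (rule grad_ln_bounded_cont[OF A(2) A(3) A(4)])
  obtain B dK where BK: "dK > 0" "\<forall>dt y. 0 < dt \<and> dt < dK \<longrightarrow> norm (K1 y dt) \<le> B"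
    using A(11) by blast
  obtain dt0 L where PL: "dt0 > 0" "L > 0"
    "\<forall>dt z1 z2. 0 < dt \<and> dt < dt0 \<longrightarrow> norm (Phi dt z1 - Phi dt z2) \<le> L * norm (z1 - z2)"
    using A(12) by blast
  have xim: "\<And>n. xi n \<in> borel_measurable M"
    using distributed_measurable[OF A(14)[rule_format]] measurable_lborel1 by simp
  define c where "c = Lg + Lb"
  define a where "a = \<bar>B\<bar> + Lb * \<bar>G\<bar> + Lb * \<bar>B\<bar>"
  define C where "C = t * a * exp (c * t) + 1"
  have c0: "c \<ge> 0" using Lg Lb c_def by simp
  have a0: "a \<ge> 0" using Lb a_def by simp
  show "\<exists>C>0. \<exists>\<delta>>0. \<forall>n dt. 0 < dt \<and> dt < \<delta> \<and> real n * dt = t \<longrightarrow>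
           integrable M (\<lambda>w. norm (Ychain ?b gamma dt xi x n w - Zchain (Phi dt) ?b dt xi x n w)) \<and>
           (\<integral>w. norm (Ychain ?b gamma dt xi x n w - Zchain (Phi dt) ?b dt xi x n w) \<partial>M) \<le> C * dt"
  proof (intro exI conjI allI impI)
    show "C > 0" unfolding C_def using t a0 by (simp add: add_nonneg_pos)
    show "min 1 (min dK dt0) > 0" using BK PL by simp
    fix n dt assume ndt: "0 < dt \<and> dt < min 1 (min dK dt0) \<and> real n * dt = t"
    then have dt: "0 < dt" "dt \<le> 1" "dt < dK" "dt < dt0" "real n * dt = t" by auto
    let ?Y = "Ychain ?b gamma dt xi x" and ?Z = "Zchain (Phi dt) ?b dt xi x"
    have phic: "continuous_on UNIV (Phi dt)"
    proof -
      have "L-lipschitz_on UNIV (Phi dt)" using PL dt by (intro lipschitz_onI) (auto simp: dist_norm)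
      then show ?thesis by (rule lipschitz_on_continuous_on)
    qed
    have meas: "?Y k \<in> borel_measurable M \<and> ?Z k \<in> borel_measurable M" for k
    proof (induction k)
      case 0 then show ?case by simp
    next
      case (Suc k)
      have y: "?Y k \<in> borel_measurable M" and z: "?Z k \<in> borel_measurable M" using Suc by auto
      have bY: "(\<lambda>w. ?b (?Y k w)) \<in> borel_measurable M"
        using measurable_compose[OF y borel_measurable_continuous_onI[OF bc]] by (simp add: o_def)
      have gy: "(\<lambda>w. gamma (?Y k w)) \<in> borel_measurable M"
        using measurable_compose[OF y borel_measurable_continuous_onI[OF gc]] by (simp add: o_def)
      have pz: "(\<lambda>w. Phi dt (?Z k w)) \<in> borel_measurable M"
        using measurable_compose[OF z borel_measurable_continuous_onI[OF phic]] by (simp add: o_def)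
      have bpz: "(\<lambda>w. ?b (Phi dt (?Z k w))) \<in> borel_measurable M"
        using measurable_compose[OF pz borel_measurable_continuous_onI[OF bc]] by (simp add: o_def)
      show ?case using y bY gy pz bpz xim by (simp add: borel_measurable_add borel_measurable_scaleR)
    qed
    define e where "e k w = norm (?Y k w - ?Z k w)" for k w
    have step: "e (Suc k) w \<le> (1 + c * dt) * e k w + a * dt\<^sup>2" for k w
    proof -
      have "e (Suc k) w \<le> (1 + (Lg + Lb) * dt) * norm (?Y k w - ?Z k w)
              + (\<bar>B\<bar> + Lb * \<bar>G\<bar> + Lb * \<bar>B\<bar>) * dt\<^sup>2"
        unfolding e_def Ychain.simps Zchain.simps
      proof (rule one_step[where K = "K1 (?Z k w) dt" and Y = "?Y k w" and Z = "?Z k w"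
          and P = "Phi dt (?Z k w)" and s = "sqrt (2 * dt) *\<^sub>R xi k w" and gam = gamma and b = ?b
          and dt = dt and Lg = Lg and Lb = Lb and G = "\<bar>G\<bar>" and B = "\<bar>B\<bar>"])
        show "Phi dt (?Z k w) = ?Z k w + dt *\<^sub>R gamma (?Z k w) + dt\<^sup>2 *\<^sub>R K1 (?Z k w) dt"
          using A(10) dt(1) by simp
        show "norm (gamma (?Y k w) - gamma (?Z k w)) \<le> Lg * norm (?Y k w - ?Z k w)" by (rule Lg(2)[rule_format])
        show "norm (?b (?Y k w) - ?b (Phi dt (?Z k w))) \<le> Lb * norm (?Y k w - Phi dt (?Z k w))"
          by (rule Lb(2)[rule_format])
        show "norm (gamma (?Z k w)) \<le> \<bar>G\<bar>" using G by (meson abs_ge_self order_trans)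
        show "norm (K1 (?Z k w) dt) \<le> \<bar>B\<bar>" using BK dt by (meson abs_ge_self order_trans)
      qed (use dt Lg Lb in auto)
      then show ?thesis unfolding e_def c_def a_def by simp
    qed
    have bound: "e n w \<le> t * a * exp (c * t) * dt" for w
    proof -
      have "e n w \<le> real n * a * dt\<^sup>2 * (1 + c * dt) ^ n"
        by (rule recur[where e = "\<lambda>k. e k w"]) (use step c0 a0 dt in \<open>auto simp: e_def\<close>)
      also have "\<dots> \<le> real n * a * dt\<^sup>2 * exp (c * dt) ^ n"
        using a0 dt c0 by (intro mult_left_mono power_mono) (auto simp: exp_ge_add_one_self)
      also have "\<dots> = (real n * dt) * a * exp (c * (real n * dt)) * dt"
        by (simp add: exp_of_nat_mult[symmetric] power2_eq_square algebra_simps)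
      also have "\<dots> = t * a * exp (c * t) * dt" using dt by simp
      finally show ?thesis .
    qed
    have mn: "(\<lambda>w. norm (?Y n w - ?Z n w)) \<in> borel_measurable M" using measurable_compose[OF borel_measurable_diff[OF conjunct1[OF meas[of n]] conjunct2[OF meas[of n]]] borel_measurable_norm] by (simp add: o_def)
    show int: "integrable M (\<lambda>w. norm (?Y n w - ?Z n w))"
      by (rule finite_measure.integrable_const_bound[where B = "t * a * exp (c * t) * dt"])
         (use P.finite_measure_axioms mn bound in \<open>auto simp: e_def\<close>)
    have "(\<integral>w. norm (?Y n w - ?Z n w) \<partial>M) \<le> t * a * exp (c * t) * dt"
      by (rule prob_space.integral_le_const[OF A(1) int]) (use bound in \<open>auto simp: e_def\<close>)
    also have "\<dots> \<le> C * dt" unfolding C_def using dt by (simp add: distrib_right)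
    finally show "(\<integral>w. norm (?Y n w - ?Z n w) \<partial>M) \<le> C * dt" .
  qed
qed

end
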